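(* Let $\Gamma_1$ be the path graph with vertices $a,b,c,d$ and edges $\{a,b\},\{b,c\},\{c,d\}$. Then $\vdash_{\Gamma_1} a,c\rhd d\rightarrow (d,b\rhd a\rightarrow b,c\rhd a,d)$.
   Context: For a finite simple undirected graph $\Gamma=(V,E)$, the border of $U\subseteq V$ is ${\cal B}(U)=\{v\in U\mid (v,w)\in E\text{ for some }w\in V\setminus U\}$, and a cut $(U,W)$ is a partition $V=U\sqcup W$. Formulas are built from $\bot$, atoms $A\rhd B$ ($A,B\subseteq V$) and $\rightarrow$; $A,B$ denotes $A\cup B$ and a vertex $v$ stands for $\{v\}$. $\vdash_\Gamma\phi$ means $\phi$ is derivable by Modus Ponens from propositional tautologies and the axioms: Reflexivity $A\rhd B$ for $B\subseteq A$; Augmentation $A\rhd B\rightarrow A,C\rhd B,C$; Transitivity $A\rhd B\rightarrow(B\rhd C\rightarrow A\rhd C)$; Contiguity $A,B\rhd C\rightarrow{\cal B}(U),{\cal B}(W),B\rhd C$ for every cut $(U,W)$ of $\Gamma$ with $A\subseteq U$, $C\subseteq W$. *)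

theory Defs
  imports Main
begin

datatype 'v form =
    Bot
  | Atom "'v set" "'v set"   (infix "\<rhd>" 60)
  | Imp "'v form" "'v form"  (infixr "\<^bold>\<rightarrow>" 55)

fun eval :: "('v set \<Rightarrow> 'v set \<Rightarrow> bool) \<Rightarrow> 'v form \<Rightarrow> bool" where
  "eval I Bot = False"
| "eval I (Atom A B) = I A B"
| "eval I (Imp p q) = (eval I p \<longrightarrow> eval I q)"

definition tautology :: "'v form \<Rightarrow> bool" where
  "tautology \<phi> \<longleftrightarrow> (\<forall>I. eval I \<phi>)"

definition simple_graph :: "'v set \<Rightarrow> ('v \<times> 'v) set \<Rightarrow> bool" where
  "simple_graph V E \<longleftrightarrow> finite V \<and> E \<subseteq> V \<times> V \<and> sym E \<and> irrefl E"

definition border :: "'v set \<Rightarrow> ('v \<times> 'v) set \<Rightarrow> 'v set \<Rightarrow> 'v set" where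
  "border V E U = {v \<in> U. \<exists>w \<in> V - U. (v, w) \<in> E}"

inductive derivable :: "'v set \<Rightarrow> ('v \<times> 'v) set \<Rightarrow> 'v form \<Rightarrow> bool" for V E where
  taut: "tautology \<phi> \<Longrightarrow> derivable V E \<phi>"
| mp: "derivable V E \<phi> \<Longrightarrow> derivable V E (\<phi> \<^bold>\<rightarrow> \<psi>) \<Longrightarrow> derivable V E \<psi>"
| refl: "B \<subseteq> A \<Longrightarrow> derivable V E (A \<rhd> B)"
| augment: "derivable V E ((A \<rhd> B) \<^bold>\<rightarrow> (A \<union> C \<rhd> B \<union> C))"
| trans: "derivable V E ((A \<rhd> B) \<^bold>\<rightarrow> ((B \<rhd> C) \<^bold>\<rightarrow> (A \<rhd> C)))"
| contiguity: "U \<subseteq> V \<Longrightarrow> W = V - U \<Longrightarrow> A \<subseteq> U \<Longrightarrow> C \<subseteq> W \<Longrightarrow>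
    derivable V E ((A \<union> B \<rhd> C) \<^bold>\<rightarrow> (border V E U \<union> border V E W \<union> B \<rhd> C))"

datatype vtx = a | b | c | d

definition path_V :: "vtx set" where
  "path_V = {a, b, c, d}"

definition path_E :: "(vtx \<times> vtx) set" where
  "path_E = {(a, b), (b, a), (b, c), (c, b), (c, d), (d, c)}"

end

theory Submission
  imports Defs
begin

lemma taut_comb:
  "tautology ((p \<^bold>\<rightarrow> x1) \<^bold>\<rightarrow> (q \<^bold>\<rightarrow> x2) \<^bold>\<rightarrow> (x2 \<^bold>\<rightarrow> x3) \<^bold>\<rightarrow> (x1 \<^bold>\<rightarrow> x4)
     \<^bold>\<rightarrow> (x3 \<^bold>\<rightarrow> x4 \<^bold>\<rightarrow> x5) \<^bold>\<rightarrow> x6 \<^bold>\<rightarrow> (x5 \<^bold>\<rightarrow> x6 \<^bold>\<rightarrow> x7) \<^bold>\<rightarrow> (p \<^bold>\<rightarrow> q \<^bold>\<rightarrow> x7))"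
  unfolding tautology_def by auto

lemma c1: "derivable path_V path_E (({a, c} \<rhd> {d}) \<^bold>\<rightarrow> ({b, c} \<rhd> {d}))"
proof -
  have "derivable path_V path_E (({a} \<union> {c} \<rhd> {d}) \<^bold>\<rightarrow>
     (border path_V path_E {a,b} \<union> border path_V path_E (path_V - {a,b}) \<union> {c} \<rhd> {d}))"
    by (rule contiguity) (auto simp: path_V_def)
  moreover have "border path_V path_E {a,b} = {b}"
    by (auto simp: border_def path_V_def path_E_def)
  moreover have "path_V - {a,b} = {c,d}" by (auto simp: path_V_def)
  moreover have "border path_V path_E {c,d} = {c}"
    by (auto simp: border_def path_V_def path_E_def)
  ultimately show ?thesis by (simp add: insert_commute)
qed

lemma c2: "derivable path_V path_E (({d, b} \<rhd> {a}) \<^bold>\<rightarrow> ({b, c} \<rhd> {a}))"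
proof -
  have "derivable path_V path_E (({d} \<union> {b} \<rhd> {a}) \<^bold>\<rightarrow>
     (border path_V path_E {c,d} \<union> border path_V path_E (path_V - {c,d}) \<union> {b} \<rhd> {a}))"
    by (rule contiguity) (auto simp: path_V_def)
  moreover have "border path_V path_E {c,d} = {c}"
    by (auto simp: border_def path_V_def path_E_def)
  moreover have "path_V - {c,d} = {a,b}" by (auto simp: path_V_def)
  moreover have "border path_V path_E {a,b} = {b}"
    by (auto simp: border_def path_V_def path_E_def)
  ultimately show ?thesis by (simp add: insert_commute)
qed

lemma c3: "derivable path_V path_E (({b, c} \<rhd> {a}) \<^bold>\<rightarrow> ({b, c} \<rhd> {a, b, c}))"
  using augment[of path_V path_E "{b,c}" "{a}" "{b,c}"] by (simp add: insert_commute)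

lemma c4: "derivable path_V path_E (({b, c} \<rhd> {d}) \<^bold>\<rightarrow> ({a, b, c} \<rhd> {a, b, c, d}))"
proof -
  have "{b,c} \<union> {a,b,c} = {a,b,c}" "{d} \<union> {a,b,c} = {a,b,c,d}" by auto
  thus ?thesis using augment[of path_V path_E "{b,c}" "{d}" "{a,b,c}"] by simp
qed

theorem proposition2:
  shows "derivable path_V path_E
           (({a, c} \<rhd> {d}) \<^bold>\<rightarrow> (({d, b} \<rhd> {a}) \<^bold>\<rightarrow> ({b, c} \<rhd> {a, d})))"
proof -
  have c6: "derivable path_V path_E ({a,b,c,d} \<rhd> {a,d})" by (rule refl) auto
  note t = taut[OF taut_comb[of "{a, c} \<rhd> {d}" "{b, c} \<rhd> {d}" "{d, b} \<rhd> {a}" "{b, c} \<rhd> {a}"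
      "{b, c} \<rhd> {a, b, c}" "{a, b, c} \<rhd> {a, b, c, d}" "{b,c} \<rhd> {a,b,c,d}" "{a,b,c,d} \<rhd> {a,d}"
      "{b, c} \<rhd> {a, d}"]]
  note r1 = mp[OF c1 t]
  note r2 = mp[OF c2 r1]
  note r3 = mp[OF c3 r2]
  note r4 = mp[OF c4 r3]
  note r5 = mp[OF Defs.trans r4]
  note r6 = mp[OF c6 r5]
  show ?thesis by (rule mp[OF Defs.trans r6])
qed

end
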